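(* A family $\mathcal{X}$ of metric spaces belongs to $\mathfrak{C}_\alpha$ for some ordinal $\alpha$ if and only if it belongs to $\mathfrak{C}_\alpha$ for some countable ordinal $\alpha$; that is, $\bigcup_\alpha\mathfrak{C}_\alpha=\mathfrak{C}_{\omega_1}$.
   Context: A family $\mathcal{U}$ of metric subspaces of a metric space $(X,d)$ is $r$-disjoint if $d(x,y)>r$ whenever $x\in U$, $y\in U'$, $U\neq U'$ in $\mathcal{U}$. For families $\mathcal{X},\mathcal{Y}$ and $R\in\mathbb{R}^{\mathbb{N}}$, $\mathcal{X}\xrightarrow{R}\mathcal{Y}$ means: there is an integer $k$ such that for each $X\in\mathcal{X}$ there are subcollections $\mathcal{U}_1,\dots,\mathcal{U}_k\subseteq\mathcal{Y}$ of subspaces of $X$, each $\mathcal{U}_i$ being $R_i$-disjoint, with $\bigcup_i\mathcal{U}_i$ covering $X$. A family is bounded if the diameters of its members are uniformly bounded. $\mathfrak{C}_0$ is the class of bounded families; for an ordinal $\alpha>0$, $\mathfrak{C}_\alpha$ is the class of families $\mathcal{X}$ such that for every $R\in\mathbb{R}^{\mathbb{N}}$ there exist $\beta<\alpha$ and $\mathcal{Y}\in\mathfrak{C}_\beta$ with $\mathcal{X}\xrightarrow{R}\mathcal{Y}$. $\omega_1$ denotes the first uncountable ordinal. *)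

theory Defs
  imports "HOL-Analysis.Abstract_Metric_Spaces"
begin

text \<open>A metric space is represented as a pair (carrier, metric); a family of
metric spaces is a set of such pairs over an ambient type 'a.\<close>

type_synonym 'a mspace_rep = "'a set \<times> ('a \<Rightarrow> 'a \<Rightarrow> real)"
type_synonym 'a mfamily = "'a mspace_rep set"

definition metric_family :: "'a mfamily \<Rightarrow> bool" where
  "metric_family \<X> \<longleftrightarrow> (\<forall>X\<in>\<X>. Metric_space (fst X) (snd X))"

definition is_subspace :: "'a mspace_rep \<Rightarrow> 'a mspace_rep \<Rightarrow> bool" where
  "is_subspace Y X \<longleftrightarrow> fst Y \<subseteq> fst X \<and>
     (\<forall>x\<in>fst Y. \<forall>y\<in>fst Y. snd Y x y = snd X x y)"

text \<open>r-disjointness of a family of subspaces of a space with metric d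
  (distinct subspaces = distinct carriers)\<close>
definition r_disjoint :: "('a \<Rightarrow> 'a \<Rightarrow> real) \<Rightarrow> real \<Rightarrow> 'a mfamily \<Rightarrow> bool" where
  "r_disjoint d r \<U> \<longleftrightarrow> (\<forall>U\<in>\<U>. \<forall>U'\<in>\<U>. fst U \<noteq> fst U' \<longrightarrow>
      (\<forall>x\<in>fst U. \<forall>y\<in>fst U'. d x y > r))"

text \<open>X --R--> Y  (indices of R are 1..k; R 0 is unused)\<close>
definition arrow :: "(nat \<Rightarrow> real) \<Rightarrow> 'a mfamily \<Rightarrow> 'a mfamily \<Rightarrow> bool" where
  "arrow R \<X> \<Y> \<longleftrightarrow> (\<exists>k::nat. \<forall>X\<in>\<X>. \<exists>\<U>::nat \<Rightarrow> 'a mfamily.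
      (\<forall>i\<in>{1..k}. \<U> i \<subseteq> \<Y> \<and> (\<forall>Y\<in>\<U> i. is_subspace Y X) \<and> r_disjoint (snd X) (R i) (\<U> i))
      \<and> fst X \<subseteq> (\<Union>i\<in>{1..k}. \<Union>Y\<in>\<U> i. fst Y))"

definition bounded_family :: "'a mfamily \<Rightarrow> bool" where
  "bounded_family \<X> \<longleftrightarrow> (\<exists>B::real. \<forall>X\<in>\<X>. \<forall>x\<in>fst X. \<forall>y\<in>fst X. snd X x y \<le> B)"

definition C0 :: "'a mfamily set" where
  "C0 = {\<X>. metric_family \<X> \<and> bounded_family \<X>}"

text \<open>Ordinals are represented by well-orders r (ordinal = order type of r).
  For x in Field r, levels r x is the class C_beta where beta is the order type of
  the strict initial segment of r below x; defined by well-founded recursion.\<close>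
definition levels :: "'b rel \<Rightarrow> 'b \<Rightarrow> 'a mfamily set" where
  "levels r = wfrec (r - Id) (\<lambda>C x. if underS r x = {} then C0
      else {\<X>. metric_family \<X> \<and>
         (\<forall>R::nat \<Rightarrow> real. \<exists>y\<in>underS r x. \<exists>\<Y>. \<Y> \<in> C y \<and> arrow R \<X> \<Y>)})"

text \<open>ordclass r = C_alpha where alpha is the order type of the well-order r.\<close>
definition ordclass :: "'b rel \<Rightarrow> 'a mfamily set" where
  "ordclass r = (if Field r = {} then C0
      else {\<X>. metric_family \<X> \<and>
         (\<forall>R::nat \<Rightarrow> real. \<exists>y\<in>Field r. \<exists>\<Y>. \<Y> \<in> levels r y \<and> arrow R \<X> \<Y>)})"

definition omega1 :: "nat set rel" where
  "omega1 = cardSuc natLeq"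

end

theory Submission imports Defs "HOL-Library.Countable_Set_Type" begin

lemma lev_unfold:
  assumes "Well_order r"
  shows "levels r x = (if underS r x = {} then C0 else {\<X>. metric_family \<X> \<and>
         (\<forall>R::nat \<Rightarrow> real. \<exists>y\<in>underS r x. \<exists>\<Y>. \<Y> \<in> levels r y \<and> arrow R \<X> \<Y>)})"
proof -
  have wf: "wf (r - Id)" using assms unfolding well_order_on_def by blast
  have "levels r x = (\<lambda>C x. if underS r x = {} then C0
      else {\<X>. metric_family \<X> \<and>
         (\<forall>R::nat \<Rightarrow> real. \<exists>y\<in>underS r x. \<exists>\<Y>. \<Y> \<in> C y \<and> arrow R \<X> \<Y>)}) (cut (levels r) (r - Id) x) x"
    unfolding levels_def by (rule wfrec[OF wf])
  also have "\<dots> = (if underS r x = {} then C0 else {\<X>. metric_family \<X> \<and>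
         (\<forall>R::nat \<Rightarrow> real. \<exists>y\<in>underS r x. \<exists>\<Y>. \<Y> \<in> levels r y \<and> arrow R \<X> \<Y>)})"
  proof -
    have "\<And>y. y \<in> underS r x \<Longrightarrow> cut (levels r) (r - Id) x y = levels r y"
      by (rule cut_apply) (auto simp: underS_def)
    then have eq: "\<And>R \<X>. (\<exists>y\<in>underS r x. \<exists>\<Y>. \<Y> \<in> cut (levels r) (r - Id) x y \<and> arrow R \<X> \<Y>) = (\<exists>y\<in>underS r x. \<exists>\<Y>. \<Y> \<in> levels r y \<and> arrow R \<X> \<Y>)"
      by metis
    show ?thesis unfolding eq ..
  qed
  finally show ?thesis .
qed

lemma levels_metric: "Well_order r \<Longrightarrow> \<X> \<in> levels r x \<Longrightarrow> metric_family \<X>"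
  by (subst (asm) lev_unfold) (auto simp: C0_def split: if_splits)

lemma arrow_self: "arrow R \<X> \<X>"
  unfolding arrow_def
  apply (rule exI[of _ 1])
  apply (intro ballI)
  subgoal for X
    by (rule exI[of _ "\<lambda>_. {X}"]) (auto simp: is_subspace_def r_disjoint_def)
  done

lemma in_ordclass: "Well_order r \<Longrightarrow> x \<in> Field r \<Longrightarrow> \<X> \<in> levels r x \<Longrightarrow> \<X> \<in> ordclass r"
  unfolding ordclass_def using levels_metric arrow_self by fastforce

lemma omega1_wo: "Well_order omega1"
  unfolding omega1_def by (simp add: cardSuc_Well_order natLeq_Card_order)

lemma under_countable:
  assumes "z \<in> Field omega1"
  shows "countable (under omega1 z)"
proof -
  have co: "Card_order omega1" unfolding omega1_def by (simp add: cardSuc_Card_order natLeq_Card_order)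
  have "(card_of (underS omega1 z), cardSuc natLeq) \<in> ordLess"
    using card_of_underS[OF co assms] unfolding omega1_def .
  hence "(card_of (underS omega1 z), natLeq) \<in> ordLeq"
    using cardSuc_ordLeq_ordLess[OF natLeq_Card_order card_of_Card_order] by blast
  hence "countable (underS omega1 z)" using countable_card_le_natLeq by blast
  moreover have "under omega1 z \<subseteq> insert z (underS omega1 z)"
    unfolding under_def underS_def by auto
  ultimately show ?thesis by (meson countable_insert countable_subset)
qed

lemma Field_uncountable: "\<not> countable (Field omega1)"
proof
  assume "countable (Field omega1)"
  hence 1: "(card_of (Field omega1), natLeq) \<in> ordLeq" using countable_card_le_natLeq by blast
  have co: "Card_order omega1" unfolding omega1_def by (simp add: cardSuc_Card_order natLeq_Card_order)
  have "(card_of (Field omega1), omega1) \<in> ordIso" using card_of_Field_ordIso[OF co] .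
  hence "(omega1, natLeq) \<in> ordLeq" using 1 ordIso_iff_ordLeq ordLeq_transitive by blast
  moreover have "(natLeq, omega1) \<in> ordLess" unfolding omega1_def using cardSuc_greater natLeq_Card_order by blast
  ultimately show False using not_ordLess_ordLeq by blast
qed

lemma bound_countable:
  assumes "countable Z" "Z \<subseteq> Field omega1"
  shows "\<exists>j\<in>Field omega1. Z \<subseteq> underS omega1 j"
proof -
  let ?W = "\<Union>z\<in>Z. under omega1 z"
  have "countable ?W" using assms under_countable by blast
  hence "\<not> Field omega1 \<subseteq> ?W" using Field_uncountable countable_subset by blast
  then obtain j where j: "j \<in> Field omega1" "j \<notin> ?W" by blast
  have tot: "Total omega1" using omega1_wo unfolding well_order_on_def linear_order_on_def by blast
  have "Z \<subseteq> underS omega1 j"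
  proof
    fix z assume z: "z \<in> Z"
    hence "(j, z) \<notin> omega1" using j unfolding under_def by auto
    moreover have "z \<in> Field omega1" using z assms by auto
    moreover have "j \<noteq> z" using \<open>(j, z) \<notin> omega1\<close> omega1_wo \<open>z \<in> Field omega1\<close>
      by (metis Refl_under_in wo_rel.REFL wo_rel_def under_def mem_Collect_eq)
    ultimately show "z \<in> underS omega1 j" using tot j unfolding total_on_def underS_def by auto
  qed
  thus ?thesis using j by blast
qed


definition arrowk :: "nat \<Rightarrow> (nat \<Rightarrow> real) \<Rightarrow> 'a mfamily \<Rightarrow> 'a mfamily \<Rightarrow> bool" where
  "arrowk k R \<X> \<Y> \<longleftrightarrow> (\<forall>X\<in>\<X>. \<exists>\<U>::nat \<Rightarrow> 'a mfamily.
      (\<forall>i\<in>{1..k}. \<U> i \<subseteq> \<Y> \<and> (\<forall>Y\<in>\<U> i. is_subspace Y X) \<and> r_disjoint (snd X) (R i) (\<U> i))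
      \<and> fst X \<subseteq> (\<Union>i\<in>{1..k}. \<Union>Y\<in>\<U> i. fst Y))"

lemma arrow_arrowk: "arrow R \<X> \<Y> \<longleftrightarrow> (\<exists>k. arrowk k R \<X> \<Y>)"
  unfolding arrow_def arrowk_def by blast

lemma arrowk_mono:
  assumes "arrowk k R \<X> \<Y>" "\<And>i. i \<in> {1..k} \<Longrightarrow> R' i \<le> R i"
  shows "arrowk k R' \<X> \<Y>"
proof -
  have "r_disjoint d (R' i) U" if "r_disjoint d (R i) U" "i \<in> {1..k}" for d i U
    using that assms(2)[of i] unfolding r_disjoint_def by force
  thus ?thesis using assms(1) unfolding arrowk_def by metis
qed

definition Pw :: "'a mfamily \<Rightarrow> bool" where
  "Pw \<X> \<longleftrightarrow> (\<exists>y\<in>Field omega1. \<X> \<in> levels omega1 y)"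

definition seqf :: "nat list \<Rightarrow> nat \<Rightarrow> real" where
  "seqf s i = real (s ! (i - 1))"

lemma core:
  assumes mf: "metric_family \<X>" and h: "\<forall>R. \<exists>\<Y>. Pw \<Y> \<and> arrow R \<X> \<Y>"
  shows "Pw \<X>"
proof -
  define good where "good s y \<longleftrightarrow> y \<in> Field omega1 \<and>
      (\<exists>\<Y>\<in>levels omega1 y. arrowk (length s) (seqf s) \<X> \<Y>)" for s y
  define ch where "ch s = (SOME y. good s y)" for s
  define Z where "Z = ch ` {s. \<exists>y. good s y}"
  have cZ: "countable Z" unfolding Z_def by simp
  have chg: "good s (ch s)" if "\<exists>y. good s y" for s
    unfolding ch_def using that by (rule someI_ex)
  have ZF: "Z \<subseteq> Field omega1" unfolding Z_def using chg unfolding good_def by blast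
  obtain j where j: "j \<in> Field omega1" "Z \<subseteq> underS omega1 j"
    using bound_countable[OF cZ ZF] by blast
  have key: "\<exists>y\<in>underS omega1 j. \<exists>\<Y>. \<Y> \<in> levels omega1 y \<and> arrow R \<X> \<Y>" for R
  proof -
    define f where "f n = nat \<lceil>R n\<rceil>" for n
    obtain \<Y> where Y: "Pw \<Y>" "arrow (\<lambda>n. real (f n)) \<X> \<Y>" using h by blast
    obtain k where k: "arrowk k (\<lambda>n. real (f n)) \<X> \<Y>" using Y(2) arrow_arrowk by blast
    obtain y where y: "y \<in> Field omega1" "\<Y> \<in> levels omega1 y" using Y(1) Pw_def by blast
    define s where "s = map f [1..<k+1]"
    have ls: "length s = k" unfolding s_def by simp
    have sf: "seqf s i = real (f i)" if "i \<in> {1..k}" for i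
      using that unfolding seqf_def s_def by (auto simp del: upt_Suc)
    have "arrowk (length s) (seqf s) \<X> \<Y>"
      using arrowk_mono[OF k] sf ls by simp
    hence "good s y" using y good_def by blast
    hence g: "good s (ch s)" using chg by blast
    hence "ch s \<in> Z" unfolding Z_def by blast
    hence inS: "ch s \<in> underS omega1 j" using j by blast
    obtain \<Y>' where Y': "\<Y>' \<in> levels omega1 (ch s)" "arrowk k (seqf s) \<X> \<Y>'"
      using g ls good_def by blast
    have "R i \<le> seqf s i" if "i \<in> {1..k}" for i
      using sf[OF that] unfolding f_def by linarith
    hence "arrowk k R \<X> \<Y>'" using arrowk_mono[OF Y'(2)] by blast
    thus ?thesis using inS Y'(1) arrow_arrowk by blast
  qed
  have "underS omega1 j \<noteq> {}" using key by blast
  hence "\<X> \<in> levels omega1 j" using key mf by (subst lev_unfold[OF omega1_wo]) auto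
  thus ?thesis using j Pw_def by blast
qed


lemma C0_Pw: assumes "\<X> \<in> C0" shows "Pw \<X>"
proof -
  have wf: "wf (omega1 - Id)" using omega1_wo unfolding well_order_on_def by blast
  have ne: "Field omega1 \<noteq> {}" using Field_uncountable by auto
  then obtain a where "a \<in> Field omega1" by blast
  then obtain y0 where y0: "y0 \<in> Field omega1" "\<And>y. (y, y0) \<in> omega1 - Id \<Longrightarrow> y \<notin> Field omega1"
    using wf unfolding wf_eq_minimal by metis
  have "underS omega1 y0 = {}"
  proof (rule ccontr)
    assume "underS omega1 y0 \<noteq> {}"
    then obtain y where "y \<in> underS omega1 y0" by blast
    hence "(y, y0) \<in> omega1 - Id" "y \<in> Field omega1" unfolding underS_def by (auto simp: FieldI1)
    thus False using y0(2) by blast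
  qed
  hence "\<X> \<in> levels omega1 y0" using assms by (subst lev_unfold[OF omega1_wo]) simp
  thus ?thesis using y0 Pw_def by blast
qed

lemma levels_Pw:
  assumes wo: "Well_order r"
  shows "\<X> \<in> levels r x \<Longrightarrow> Pw \<X>"
proof (induction x arbitrary: \<X> rule: wf_induct[of "r - Id"])
  case 1
  then show ?case using wo unfolding well_order_on_def by blast
next
  case (2 x)
  show ?case
  proof (cases "underS r x = {}")
    case True
    then show ?thesis using 2(2) C0_Pw by (subst (asm) lev_unfold[OF wo]) simp
  next
    case False
    hence mf: "metric_family \<X>" and hh: "\<forall>R. \<exists>y\<in>underS r x. \<exists>\<Y>. \<Y> \<in> levels r y \<and> arrow R \<X> \<Y>"
      using 2(2) by (subst (asm) lev_unfold[OF wo], simp)+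
    have "\<forall>R. \<exists>\<Y>. Pw \<Y> \<and> arrow R \<X> \<Y>"
    proof
      fix R
      obtain y \<Y> where "y \<in> underS r x" "\<Y> \<in> levels r y" "arrow R \<X> \<Y>" using hh by blast
      moreover hence "(y, x) \<in> r - Id" unfolding underS_def by auto
      ultimately show "\<exists>\<Y>. Pw \<Y> \<and> arrow R \<X> \<Y>" using 2(1) by blast
    qed
    thus ?thesis using core mf by blast
  qed
qed

lemma ordclass_Pw:
  assumes wo: "Well_order r" and "\<X> \<in> ordclass r"
  shows "Pw \<X>"
proof (cases "Field r = {}")
  case True
  then show ?thesis using assms C0_Pw unfolding ordclass_def by simp
next
  case False
  hence mf: "metric_family \<X>" and hh: "\<forall>R. \<exists>y\<in>Field r. \<exists>\<Y>. \<Y> \<in> levels r y \<and> arrow R \<X> \<Y>"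
    using assms unfolding ordclass_def by simp_all
  have "\<forall>R. \<exists>\<Y>. Pw \<Y> \<and> arrow R \<X> \<Y>" using hh levels_Pw[OF wo] by blast
  thus ?thesis using core mf by blast
qed

lemma transport:
  assumes wo: "Well_order r" and dc: "\<And>a b. a \<in> A \<Longrightarrow> (b, a) \<in> r \<Longrightarrow> b \<in> A"
    and inj: "inj_on g A" and r'_def: "r' = dir_image (Restr r A) g" and wo': "Well_order r'"
  shows "x \<in> A \<Longrightarrow> (levels r' (g x) :: 'a mfamily set) = levels r x"
proof (induction x rule: wf_induct[of "r - Id"])
  case 1
  then show ?case using wo unfolding well_order_on_def by blast
next
  case (2 x)
  have us: "underS r' (g x) = g ` underS r x"
  proof
    show "underS r' (g x) \<subseteq> g ` underS r x"
    proof
      fix b assume "b \<in> underS r' (g x)"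
      then obtain a c where ac: "b = g a" "g x = g c" "(a, c) \<in> r" "a \<in> A" "c \<in> A" "b \<noteq> g x"
        unfolding underS_def r'_def dir_image_def by auto
      have "c = x" using inj ac 2(2) by (metis inj_onD)
      thus "b \<in> g ` underS r x" using ac unfolding underS_def by auto
    qed
  next
    show "g ` underS r x \<subseteq> underS r' (g x)"
    proof
      fix b assume "b \<in> g ` underS r x"
      then obtain a where a: "b = g a" "(a, x) \<in> r" "a \<noteq> x" unfolding underS_def by auto
      have aA: "a \<in> A" using dc[OF 2(2) a(2)] .
      have "g a \<noteq> g x" using inj aA 2(2) a(3) by (metis inj_onD)
      moreover have "(g a, g x) \<in> r'" unfolding r'_def dir_image_def using a aA 2(2) by blast
      ultimately show "b \<in> underS r' (g x)" using a unfolding underS_def by auto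
    qed
  qed
  have ih: "(levels r' (g y) :: 'a mfamily set) = levels r y" if "y \<in> underS r x" for y
  proof -
    have "(y, x) \<in> r - Id" "y \<in> A" using that dc[OF 2(2)] unfolding underS_def by auto
    thus ?thesis using 2(1) by blast
  qed
  have eq: "(\<exists>y\<in>underS r' (g x). \<exists>\<Y>. \<Y> \<in> levels r' y \<and> arrow R \<X> \<Y>) =
            (\<exists>y\<in>underS r x. \<exists>\<Y>. \<Y> \<in> levels r y \<and> arrow R \<X> \<Y>)" for R and \<X> :: "'a mfamily"
    unfolding us using ih by auto
  show ?case
    apply (subst lev_unfold[OF wo'])
    apply (subst lev_unfold[OF wo])
    using us eq by (simp only: image_is_empty)
qed


lemma Pw_nat:
  assumes "Pw (\<X> :: 'a mfamily)"
  shows "\<exists>r::nat rel. Well_order r \<and> countable (Field r) \<and> \<X> \<in> ordclass r"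
proof -
  obtain y where y: "y \<in> Field omega1" "\<X> \<in> levels omega1 y" using assms Pw_def by blast
  define A where "A = under omega1 y"
  have cA: "countable A" using under_countable[OF y(1)] A_def by simp
  define g where "g = to_nat_on A"
  have inj: "inj_on g A" unfolding g_def using cA by (simp add: inj_on_to_nat_on)
  define r' where "r' = dir_image (Restr omega1 A) g"
  have woR: "Well_order (Restr omega1 A)" using omega1_wo Well_order_Restr by blast
  have "Field (Restr omega1 A) \<subseteq> A" by (rule Field_Restr_subset)
  hence wo': "Well_order r'" unfolding r'_def using Well_order_dir_image[OF woR] inj inj_on_subset by blast
  have tr: "trans omega1" using omega1_wo unfolding well_order_on_def linear_order_on_def
      partial_order_on_def preorder_on_def by blast
  have dc: "b \<in> A" if "a \<in> A" "(b, a) \<in> omega1" for a b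
    using that tr unfolding A_def under_def by (meson mem_Collect_eq transD)
  have refl: "(y, y) \<in> omega1" using y(1) omega1_wo
    by (metis wo_rel.REFL wo_rel_def refl_on_def)
  hence yA: "y \<in> A" unfolding A_def under_def by simp
  have lev: "(levels r' (g y) :: 'a mfamily set) = levels omega1 y"
    using transport[of omega1 A g r' y] dc inj r'_def wo' yA omega1_wo by blast
  have "(g y, g y) \<in> r'" unfolding r'_def dir_image_def using refl yA by blast
  hence "g y \<in> Field r'" by (simp add: FieldI1)
  hence "\<X> \<in> ordclass r'" using in_ordclass[OF wo'] lev y(2) by blast
  thus ?thesis using wo' by blast
qed

theorem theorem3p5:
  fixes \<X> :: "'a mfamily"
  shows "((\<exists>r::'b rel. Well_order r \<and> \<X> \<in> ordclass r) \<longrightarrow>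
            (\<exists>r::nat rel. Well_order r \<and> countable (Field r) \<and> \<X> \<in> ordclass r)
            \<and> \<X> \<in> ordclass omega1)
       \<and> (\<X> \<in> ordclass omega1 \<longrightarrow> (\<exists>r::nat set rel. Well_order r \<and> \<X> \<in> ordclass r))"
proof (intro conjI impI)
  assume "\<exists>r::'b rel. Well_order r \<and> \<X> \<in> ordclass r"
  then obtain r :: "'b rel" where "Well_order r" "\<X> \<in> ordclass r" by blast
  hence P: "Pw \<X>" using ordclass_Pw by blast
  show "\<exists>r::nat rel. Well_order r \<and> countable (Field r) \<and> \<X> \<in> ordclass r" using Pw_nat[OF P] .
  show "\<X> \<in> ordclass omega1" using P in_ordclass[OF omega1_wo] unfolding Pw_def by blast
next
  assume "\<X> \<in> ordclass omega1"
  thus "\<exists>r::nat set rel. Well_order r \<and> \<X> \<in> ordclass r" using omega1_wo by blast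
qed

end
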